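(* Let $U:[0,T]\times\mathbb{R}^N\to\mathbb{R}\cup\{\pm\infty\}$ be proper and lower semicontinuous, and let $H:[0,T]\times\mathbb{R}^N\times\mathbb{R}^N\to\mathbb{R}$ satisfy (H1)–(H3); put $L(t,x,\cdot)=H^*(t,x,\cdot)$. Suppose that for every $(t,x)\in\mathrm{dom}\,U\cap[0,T)\times\mathbb{R}^N$ and every $(p_t,p_x)\in\partial U(t,x)$ one has $-p_t+H(t,x,-p_x)\geq0$. Then for every $(t,x)\in\mathrm{dom}\,U\cap[0,T)\times\mathbb{R}^N$ and every $(n^t,n^x,n^u)\in N_{\mathrm{epi}\,U}(t,x,U(t,x))$ there exist sequences $(t_k,x_k)\to(t,x)$, $\alpha_k\to0$ and $v_k\in\mathrm{dom}\,L(t_k,x_k,\cdot)$ such that $n^t+\langle v_k,n^x\rangle-n^uL(t_k,x_k,v_k)\leq\alpha_k$ for all $k\in\mathbb{N}$.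
   Context: $\mathbb{B}_R$ is the closed ball of radius $R$ at $0$. (H1) $H$ is continuous in all variables. (H2) $H(t,x,p)$ is convex in $p$. (H3) for every $R\geq0$ there is $C_R\geq0$ with $|H(t,x,p)-H(t,x,q)|\leq C_R|p-q|$ for all $t\in[0,T]$, $x\in\mathbb{B}_R$, $p,q$. $H^*(t,x,v)=\sup_p\{\langle v,p\rangle-H(t,x,p)\}$. $\mathrm{dom}\,\varphi=\{z:\varphi(z)\neq\pm\infty\}$, $\mathrm{epi}\,\varphi=\{(z,r):\varphi(z)\leq r\}$; proper means never $-\infty$ and not identically $+\infty$. $U$ is regarded as $+\infty$ outside $[0,T]\times\mathbb{R}^N$. Subderivative: $d\varphi(z)(v)=\liminf_{\tau\to0^+,y\to v}(\varphi(z+\tau y)-\varphi(z))/\tau$; subdifferential $\partial\varphi(z)=\{p:\langle v,p\rangle\leq d\varphi(z)(v)\ \forall v\}$. For $E\subset\mathbb{R}^M$, $w\in E$: $T_E(w)=\{\zeta:\liminf_{\tau\to0^+}\mathrm{dist}(w+\tau\zeta,E)/\tau=0\}$ and $N_E(w)=\{\xi:\langle\zeta,\xi\rangle\leq0\ \forall\zeta\in T_E(w)\}$. *)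

theory Defs
  imports "HOL-Analysis.Analysis" "HOL-Library.Extended_Real"
begin

definition lsc :: "('a::topological_space \<Rightarrow> ereal) \<Rightarrow> bool" where
  "lsc f \<longleftrightarrow> (\<forall>z. f z \<le> Liminf (at z) f)"

definition proper_fun :: "('a \<Rightarrow> ereal) \<Rightarrow> bool" where
  "proper_fun f \<longleftrightarrow> (\<forall>z. f z \<noteq> -\<infinity>) \<and> (\<exists>z. f z \<noteq> \<infinity>)"

definition edom :: "('a \<Rightarrow> ereal) \<Rightarrow> 'a set" where
  "edom f = {z. f z \<noteq> \<infinity> \<and> f z \<noteq> -\<infinity>}"

definition epi :: "('a \<Rightarrow> ereal) \<Rightarrow> ('a \<times> real) set" where
  "epi f = {(z, r). f z \<le> ereal r}"

definition subderiv :: "('a::real_normed_vector \<Rightarrow> ereal) \<Rightarrow> 'a \<Rightarrow> 'a \<Rightarrow> ereal" where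
  "subderiv f z v =
     Liminf (at_right (0::real) \<times>\<^sub>F nhds v)
       (\<lambda>(\<tau>, y). (f (z + \<tau> *\<^sub>R y) - f z) / ereal \<tau>)"

definition subdiff :: "('a::real_inner \<Rightarrow> ereal) \<Rightarrow> 'a \<Rightarrow> 'a set" where
  "subdiff f z = {p. \<forall>v. ereal (inner v p) \<le> subderiv f z v}"

definition tangent_cone :: "'a::real_normed_vector set \<Rightarrow> 'a \<Rightarrow> 'a set" where
  "tangent_cone E w =
     {\<zeta>. Liminf (at_right (0::real)) (\<lambda>\<tau>. ereal (infdist (w + \<tau> *\<^sub>R \<zeta>) E / \<tau>)) = 0}"

definition normal_cone :: "'a::real_inner set \<Rightarrow> 'a \<Rightarrow> 'a set" where
  "normal_cone E w = {\<xi>. \<forall>\<zeta>\<in>tangent_cone E w. inner \<zeta> \<xi> \<le> 0}"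

text \<open>Legendre-Fenchel conjugate in the last variable: L(t,x,v) = H^*(t,x,v)\<close>
definition hconj :: "(real \<Rightarrow> 'a::real_inner \<Rightarrow> 'a \<Rightarrow> real) \<Rightarrow> real \<Rightarrow> 'a \<Rightarrow> 'a \<Rightarrow> ereal" where
  "hconj H t x v = (SUP p. ereal (inner v p - H t x p))"

end

theory Submission
  imports Defs
begin

lemma proximal_subdiff:
  fixes U :: "'b::real_inner \<Rightarrow> ereal"
  assumes Uz: "U z1 = ereal u" and rho: "\<rho> > 0"
    and prox: "\<And>h. norm h < \<rho> \<Longrightarrow> ereal (u + inner h p - c * (norm h)\<^sup>2) \<le> U (z1 + h)"
  shows "p \<in> subdiff U z1"
  unfolding subdiff_def subderiv_def
proof (safe)
  fix v :: 'b
  let ?F = "at_right (0::real) \<times>\<^sub>F nhds v"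
  show "ereal (inner v p) \<le> Liminf ?F (\<lambda>(\<tau>, y). (U (z1 + \<tau> *\<^sub>R y) - U z1) / ereal \<tau>)"
  proof (subst le_Liminf_iff, safe)
    fix y assume "y < ereal (inner v p)"
    then obtain y0 where y0: "y < ereal y0" "y0 < inner v p" using ereal_dense2 by force
    have f1: "(fst \<longlongrightarrow> 0) ?F"
      using filterlim_fst[of "at_right (0::real)" "nhds v"]
      by (rule filterlim_mono) (auto simp: at_within_def)
    have f2: "(snd \<longlongrightarrow> v) ?F" using filterlim_snd by blast
    have "((\<lambda>x. inner (snd x) p - c * fst x * (norm (snd x))\<^sup>2) \<longlongrightarrow> inner v p - c * 0 * (norm v)\<^sup>2) ?F"
      by (intro tendsto_intros f1 f2)
    then have ev1: "eventually (\<lambda>x. y0 < inner (snd x) p - c * fst x * (norm (snd x))\<^sup>2) ?F"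
      using y0(2) by (simp add: order_tendstoD(1))
    have "((\<lambda>x. fst x *\<^sub>R snd x) \<longlongrightarrow> 0 *\<^sub>R v) ?F" by (intro tendsto_intros f1 f2)
    then have "((\<lambda>x. norm (fst x *\<^sub>R snd x)) \<longlongrightarrow> 0) ?F" using tendsto_norm by fastforce
    then have ev2: "eventually (\<lambda>x. norm (fst x *\<^sub>R snd x) < \<rho>) ?F"
      using rho by (simp add: order_tendstoD(2))
    have ev3: "eventually (\<lambda>x. 0 < fst x) ?F"
      using filterlim_fst[of "at_right (0::real)" "nhds v"] eventually_at_right_less[of "0::real"]
      by (simp add: filterlim_iff)
    show "eventually (\<lambda>x. y < (case x of (\<tau>, y) \<Rightarrow> (U (z1 + \<tau> *\<^sub>R y) - U z1) / ereal \<tau>)) ?F"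
      using ev1 ev2 ev3
    proof eventually_elim
      case (elim x)
      obtain \<tau> w where x: "x = (\<tau>, w)" by (cases x)
      have t0: "\<tau> > 0" using elim x by simp
      have le: "ereal (u + inner (\<tau> *\<^sub>R w) p - c * (norm (\<tau> *\<^sub>R w))\<^sup>2) \<le> U (z1 + \<tau> *\<^sub>R w)"
      proof -
        have "norm (\<tau> *\<^sub>R w) < \<rho>" using elim x by simp
        then show ?thesis by (rule prox)
      qed
      have eq: "u + inner (\<tau> *\<^sub>R w) p - c * (norm (\<tau> *\<^sub>R w))\<^sup>2
          = u + \<tau> * (inner w p - c * \<tau> * (norm w)\<^sup>2)"
      proof -
        have "norm (\<tau> *\<^sub>R w) = \<tau> * norm w" using t0 by simp
        then have "(norm (\<tau> *\<^sub>R w))\<^sup>2 = \<tau> * \<tau> * (norm w)\<^sup>2" by (simp add: power2_eq_square)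
        moreover have "inner (\<tau> *\<^sub>R w) p = \<tau> * inner w p" by simp
        ultimately show ?thesis by (simp add: right_diff_distrib)
      qed
      have g: "y0 < inner w p - c * \<tau> * (norm w)\<^sup>2" using elim x by simp
      show ?case
      proof (cases "U (z1 + \<tau> *\<^sub>R w)")
        case (real a)
        have "a \<ge> u + \<tau> * (inner w p - c * \<tau> * (norm w)\<^sup>2)" using le eq real by simp
        then have "(a - u) / \<tau> \<ge> inner w p - c * \<tau> * (norm w)\<^sup>2"
          using t0 by (simp add: field_simps)
        then have "y0 < (a - u) / \<tau>" using g by linarith
        moreover have "(U (z1 + \<tau> *\<^sub>R w) - U z1) / ereal \<tau> = ereal ((a - u) / \<tau>)"
          using real Uz t0 by simp
        moreover have "y < ereal ((a - u) / \<tau>)"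
          by (rule order_less_trans[OF y0(1)]) (simp add: \<open>y0 < (a - u) / \<tau>\<close>)
        ultimately show ?thesis using x by simp
      next
        case PInf
        then show ?thesis using x Uz t0 y0(1) by (cases y) auto
      next
        case MInf
        then show ?thesis using le by simp
      qed
    qed
  qed
qed

lemma dist_sq_pair:
  fixes x w :: "'b::real_normed_vector \<times> real"
  shows "(dist x w)\<^sup>2 = (norm (fst x - fst w))\<^sup>2 + (snd x - snd w)\<^sup>2"
proof -
  have "dist x w = sqrt ((dist (fst x) (fst w))\<^sup>2 + (dist (snd x) (snd w))\<^sup>2)"
    by (metis dist_Pair_Pair prod.collapse)
  then show ?thesis by (simp add: dist_norm power2_abs)
qed

lemma norm_diff_sq:
  fixes a b :: "'b::real_inner"
  shows "(norm (a - b))\<^sup>2 = (norm a)\<^sup>2 - 2 * inner a b + (norm b)\<^sup>2"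
  by (simp add: power2_norm_eq_inner inner_diff_left inner_diff_right inner_commute)

lemma nearest_ineq:
  fixes U :: "'b::euclidean_space \<Rightarrow> ereal"
  assumes near: "\<And>w. w \<in> epi U \<Longrightarrow> dist y (z1, r1) \<le> dist y w"
    and zr: "(z, r) \<in> epi U"
  shows "2 * inner (fst y - z1) (z - z1) - 2 * (r1 - snd y) * (r - r1) \<le> (norm (z - z1))\<^sup>2 + (r - r1)\<^sup>2"
proof -
  have "dist y (z1, r1) \<le> dist y (z, r)" using near zr by blast
  then have "(dist y (z1, r1))\<^sup>2 \<le> (dist y (z, r))\<^sup>2" by (simp add: power_mono)
  then have "(norm (fst y - z1))\<^sup>2 + (snd y - r1)\<^sup>2 \<le> (norm (fst y - z))\<^sup>2 + (snd y - r)\<^sup>2"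
    by (simp add: dist_sq_pair)
  moreover have "fst y - z = (fst y - z1) - (z - z1)" by simp
  then have "(norm (fst y - z))\<^sup>2 = (norm (fst y - z1))\<^sup>2 - 2 * inner (fst y - z1) (z - z1) + (norm (z - z1))\<^sup>2"
    by (metis norm_diff_sq)
  moreover have "(snd y - r)\<^sup>2 = (snd y - r1)\<^sup>2 - 2 * (snd y - r1) * (r - r1) + (r - r1)\<^sup>2"
    by (simp add: power2_eq_square algebra_simps)
  ultimately show ?thesis by (simp add: algebra_simps)
qed

lemma nearest_graph:
  fixes U :: "'b::euclidean_space \<Rightarrow> ereal"
  assumes proper: "\<And>z. U z \<noteq> -\<infinity>"
    and w: "(z1, r1) \<in> epi U" and near: "\<And>w. w \<in> epi U \<Longrightarrow> dist y (z1, r1) \<le> dist y w"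
    and neg: "snd y < r1"
  shows "U z1 = ereal r1"
proof (rule ccontr)
  assume ne: "U z1 \<noteq> ereal r1"
  have le: "U z1 \<le> ereal r1" using w by (simp add: epi_def)
  then obtain u where u: "U z1 = ereal u" "u < r1" using ne proper[of z1]
    by (cases "U z1") auto
  define \<mu> where "\<mu> = r1 - snd y"
  define m where "m = min \<mu> (r1 - u)"
  have m0: "m > 0" "m \<le> \<mu>" using neg u by (auto simp: m_def \<mu>_def)
  have "m \<le> r1 - u" by (simp add: m_def)
  then have "(z1, r1 - m) \<in> epi U" using u by (simp add: epi_def)
  from nearest_ineq[OF near this]
  have "2 * \<mu> * m \<le> m * m" by (simp add: \<mu>_def power2_eq_square)
  moreover have "m * m \<le> \<mu> * m" using m0 by (simp add: mult_right_mono)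
  moreover have "\<mu> * m > 0" using m0 by simp
  ultimately show False by linarith
qed

lemma nearest_subdiff:
  fixes U :: "'b::euclidean_space \<Rightarrow> ereal"
  assumes proper: "\<And>z. U z \<noteq> -\<infinity>"
    and w: "(z1, r1) \<in> epi U" and near: "\<And>w. w \<in> epi U \<Longrightarrow> dist y (z1, r1) \<le> dist y w"
    and neg: "snd y < r1"
  shows "(1 / (r1 - snd y)) *\<^sub>R (fst y - z1) \<in> subdiff U z1"
proof -
  have Uz: "U z1 = ereal r1" by (rule nearest_graph[OF assms])
  define \<mu> where "\<mu> = r1 - snd y"
  have mu0: "\<mu> > 0" using neg by (simp add: \<mu>_def)
  define p where "p = (1 / \<mu>) *\<^sub>R (fst y - z1)"
  have eta: "fst y - z1 = \<mu> *\<^sub>R p" using mu0 by (simp add: p_def)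
  define c where "c = (1 + (norm p)\<^sup>2) / \<mu>"
  have c0: "c > 0" using mu0 by (simp add: c_def add_pos_nonneg)
  have muc: "\<mu> * c = 1 + (norm p)\<^sup>2" using mu0 by (simp add: c_def)
  define \<rho> where "\<rho> = 1 / (2 * c)"
  have rho0: "\<rho> > 0" using c0 by (simp add: \<rho>_def)
  have prox: "ereal (r1 + inner h p - c * (norm h)\<^sup>2) \<le> U (z1 + h)" if hr: "norm h < \<rho>" for h
  proof -
    show "ereal (r1 + inner h p - c * (norm h)\<^sup>2) \<le> U (z1 + h)"
    proof (rule ccontr)
      assume "\<not> ?thesis"
      then have lt: "U (z1 + h) < ereal (r1 + inner h p - c * (norm h)\<^sup>2)" by simp
      define N where "N = (norm h)\<^sup>2"
      define I where "I = inner h p"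
      define P where "P = (norm p)\<^sup>2"
      define D where "D = I - c * N"
      have hne: "h \<noteq> 0"
      proof
        assume "h = 0" then show False using lt Uz by simp
      qed
      have N0: "N > 0" using hne by (simp add: N_def)
      have "r1 + D = r1 + inner h p - c * (norm h)\<^sup>2" by (simp add: D_def I_def N_def)
      then have "U (z1 + h) \<le> ereal (r1 + D)" using lt by (metis less_imp_le)
      then have "(z1 + h, r1 + D) \<in> epi U" by (simp add: epi_def)
      from nearest_ineq[OF near this]
      have K: "2 * inner (fst y - z1) h - 2 * \<mu> * D \<le> N + D\<^sup>2"
        by (simp add: \<mu>_def N_def)
      have "inner (fst y - z1) h = \<mu> * I" by (simp add: eta I_def inner_commute)
      then have K2: "2 * (\<mu> * c) * N \<le> N + D\<^sup>2" using K by (simp add: D_def algebra_simps)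
      have CS: "I\<^sup>2 \<le> N * P"
      proof -
        have "\<bar>I\<bar> \<le> norm h * norm p" unfolding I_def by (rule Cauchy_Schwarz_ineq2)
        then have "\<bar>I\<bar>\<^sup>2 \<le> (norm h * norm p)\<^sup>2" by (rule power_mono) simp
        then show ?thesis by (simp add: N_def P_def power_mult_distrib)
      qed
      have D2: "D\<^sup>2 \<le> 2 * I\<^sup>2 + 2 * (c * N)\<^sup>2"
      proof -
        have "0 \<le> (I + c * N)\<^sup>2" by simp
        then show ?thesis by (simp add: D_def power2_eq_square algebra_simps)
      qed
      have e1: "2 * (\<mu> * c) * N = 2 * N + 2 * (N * P)" using muc by (simp add: P_def algebra_simps)
      have "2 * N + 2 * (N * P) \<le> N + 2 * (N * P) + 2 * (c * N)\<^sup>2"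
        using K2 CS D2 e1 by linarith
      then have "N \<le> 2 * (c * N)\<^sup>2" by linarith
      then have "N * 1 \<le> N * (2 * c\<^sup>2 * N)" by (simp add: power2_eq_square mult.assoc mult.left_commute)
      then have "1 \<le> 2 * c\<^sup>2 * N" using N0 by (simp add: mult_le_cancel_left_pos)
      moreover have "N < \<rho>\<^sup>2" unfolding N_def using hr by (simp add: power_strict_mono)
      then have "2 * c\<^sup>2 * N < 2 * c\<^sup>2 * \<rho>\<^sup>2" using c0 by simp
      moreover have "2 * c\<^sup>2 * \<rho>\<^sup>2 = 1 / 2" using c0 by (simp add: \<rho>_def power2_eq_square)
      ultimately show False by linarith
    qed
  qed
  have "p \<in> subdiff U z1" using proximal_subdiff[of U z1 r1 \<rho> p c] Uz rho0 prox by blast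
  then show ?thesis by (simp add: p_def \<mu>_def)
qed

lemma tangent_from_seq:
  fixes E :: "'c::euclidean_space set"
  assumes s0: "\<And>j. s j > 0" and slim: "s \<longlonglongrightarrow> 0"
    and dl: "dd \<longlonglongrightarrow> l" and inE: "\<And>j. w0 + s j *\<^sub>R dd j \<in> E"
  shows "l \<in> tangent_cone E w0"
  unfolding tangent_cone_def
proof (safe, rule antisym)
  let ?f = "\<lambda>\<tau>. ereal (infdist (w0 + \<tau> *\<^sub>R l) E / \<tau>)"
  show "0 \<le> Liminf (at_right 0) ?f"
  proof (rule Liminf_bounded)
    show "eventually (\<lambda>\<tau>. 0 \<le> ?f \<tau>) (at_right 0)"
      using eventually_at_right_less[of "0::real"]
      by eventually_elim (simp add: infdist_nonneg)
  qed
  show "Liminf (at_right 0) ?f \<le> 0"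
  proof (rule ccontr)
    assume "\<not> ?thesis"
    then have "0 < Liminf (at_right 0) ?f" by simp
    then obtain e where e: "0 < ereal e" "ereal e < Liminf (at_right 0) ?f"
      using ereal_dense2 by blast
    have ev: "eventually (\<lambda>\<tau>. ereal e < ?f \<tau>) (at_right 0)" using e(2) by (rule less_LiminfD)
    have "filterlim s (at_right 0) sequentially"
    proof -
      have "\<forall>j. s j \<noteq> 0 \<and> s j \<in> {0<..}" using s0 by (metis greaterThan_iff less_irrefl)
      then show ?thesis unfolding filterlim_at using slim by (simp add: always_eventually)
    qed
    then have "\<forall>P. eventually P (at_right 0) \<longrightarrow> eventually (\<lambda>x. P (s x)) sequentially"
      by (simp add: filterlim_iff)
    then have ev1: "eventually (\<lambda>j. ereal e < ?f (s j)) sequentially"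
      using ev by blast
    have "((\<lambda>j. norm (l - dd j)) \<longlongrightarrow> norm (l - l)) sequentially"
      by (intro tendsto_intros dl)
    then have ev2: "eventually (\<lambda>j. norm (l - dd j) < e) sequentially"
      using e(1) by (simp add: order_tendstoD(2))
    from ev1 ev2 have "eventually (\<lambda>j. False) sequentially"
    proof eventually_elim
      case (elim j)
      have "infdist (w0 + s j *\<^sub>R l) E \<le> dist (w0 + s j *\<^sub>R l) (w0 + s j *\<^sub>R dd j)"
        by (rule infdist_le[OF inE])
      also have "\<dots> = s j * norm (l - dd j)"
        using s0[of j] by (simp add: dist_norm scaleR_diff_right[symmetric])
      finally have "infdist (w0 + s j *\<^sub>R l) E / s j \<le> norm (l - dd j)"
        using s0[of j] by (simp add: divide_le_eq mult.commute)
      then show False using elim by simp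
    qed
    then show False by simp
  qed
qed

lemma normal_approx:
  fixes E :: "'c::euclidean_space set"
  assumes xi: "\<xi> \<in> normal_cone E w0" and e: "\<epsilon> > 0"
  shows "\<exists>\<delta>>0. \<forall>\<tau> w. 0 < \<tau> \<longrightarrow> \<tau> < \<delta> \<longrightarrow> w \<in> E \<longrightarrow>
           (norm (w0 + \<tau> *\<^sub>R \<xi> - w))\<^sup>2 \<le> \<tau>\<^sup>2 * ((norm \<xi>)\<^sup>2 + \<delta>) \<longrightarrow> norm (w - w0) \<le> \<epsilon> * \<tau>"
proof (rule ccontr)
  assume "\<not> ?thesis"
  then have "\<forall>\<delta>>0. \<exists>\<tau> w. 0 < \<tau> \<and> \<tau> < \<delta> \<and> w \<in> E \<and>
           (norm (w0 + \<tau> *\<^sub>R \<xi> - w))\<^sup>2 \<le> \<tau>\<^sup>2 * ((norm \<xi>)\<^sup>2 + \<delta>) \<and> \<epsilon> * \<tau> < norm (w - w0)"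
    by (auto simp: not_le)
  then have H: "\<And>\<delta>. \<delta> > 0 \<Longrightarrow> \<exists>\<tau> w. 0 < \<tau> \<and> \<tau> < \<delta> \<and> w \<in> E \<and>
           (norm (w0 + \<tau> *\<^sub>R \<xi> - w))\<^sup>2 \<le> \<tau>\<^sup>2 * ((norm \<xi>)\<^sup>2 + \<delta>) \<and> \<epsilon> * \<tau> < norm (w - w0)"
    by blast
  have "\<forall>j::nat. \<exists>\<tau> w. 0 < \<tau> \<and> \<tau> < 1 / Suc j \<and> w \<in> E \<and>
           (norm (w0 + \<tau> *\<^sub>R \<xi> - w))\<^sup>2 \<le> \<tau>\<^sup>2 * ((norm \<xi>)\<^sup>2 + 1 / Suc j) \<and> \<epsilon> * \<tau> < norm (w - w0)"
  proof
    fix j :: nat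
    have "(1 / real (Suc j)) > 0" by simp
    then show "\<exists>\<tau> w. 0 < \<tau> \<and> \<tau> < 1 / Suc j \<and> w \<in> E \<and>
           (norm (w0 + \<tau> *\<^sub>R \<xi> - w))\<^sup>2 \<le> \<tau>\<^sup>2 * ((norm \<xi>)\<^sup>2 + 1 / Suc j) \<and> \<epsilon> * \<tau> < norm (w - w0)"
      by (rule H)
  qed
  then have "\<exists>T. \<forall>j. \<exists>w. 0 < T j \<and> T j < 1 / Suc j \<and> w \<in> E \<and>
           (norm (w0 + T j *\<^sub>R \<xi> - w))\<^sup>2 \<le> (T j)\<^sup>2 * ((norm \<xi>)\<^sup>2 + 1 / Suc j) \<and> \<epsilon> * T j < norm (w - w0)"
    by (rule choice)
  then obtain T where "\<forall>j. \<exists>w. 0 < T j \<and> T j < 1 / Suc j \<and> w \<in> E \<and>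
           (norm (w0 + T j *\<^sub>R \<xi> - w))\<^sup>2 \<le> (T j)\<^sup>2 * ((norm \<xi>)\<^sup>2 + 1 / Suc j) \<and> \<epsilon> * T j < norm (w - w0)"
    by blast
  then have "\<exists>W. \<forall>j. 0 < T j \<and> T j < 1 / Suc j \<and> W j \<in> E \<and>
           (norm (w0 + T j *\<^sub>R \<xi> - W j))\<^sup>2 \<le> (T j)\<^sup>2 * ((norm \<xi>)\<^sup>2 + 1 / Suc j) \<and> \<epsilon> * T j < norm (W j - w0)"
    by (rule choice)
  then obtain W where TW: "\<And>j. 0 < T j \<and> T j < 1 / Suc j \<and> W j \<in> E \<and>
           (norm (w0 + T j *\<^sub>R \<xi> - W j))\<^sup>2 \<le> (T j)\<^sup>2 * ((norm \<xi>)\<^sup>2 + 1 / Suc j) \<and> \<epsilon> * T j < norm (W j - w0)"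
    by blast
  define d where "d j = (1 / T j) *\<^sub>R (W j - w0)" for j
  have T0: "T j > 0" for j using TW by blast
  have Wd: "W j = w0 + T j *\<^sub>R d j" for j using T0[of j] by (simp add: d_def)
  have dsq: "(norm (\<xi> - d j))\<^sup>2 \<le> (norm \<xi>)\<^sup>2 + 1 / Suc j" for j
  proof -
    have "w0 + T j *\<^sub>R \<xi> - W j = T j *\<^sub>R (\<xi> - d j)" by (simp add: Wd scaleR_diff_right)
    then have "(norm (w0 + T j *\<^sub>R \<xi> - W j))\<^sup>2 = (T j)\<^sup>2 * (norm (\<xi> - d j))\<^sup>2"
      using T0[of j] by (simp add: power_mult_distrib)
    moreover have "(norm (w0 + T j *\<^sub>R \<xi> - W j))\<^sup>2 \<le> (T j)\<^sup>2 * ((norm \<xi>)\<^sup>2 + 1 / Suc j)" using TW[of j] by blast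
    ultimately have "(T j)\<^sup>2 * (norm (\<xi> - d j))\<^sup>2 \<le> (T j)\<^sup>2 * ((norm \<xi>)\<^sup>2 + 1 / Suc j)" by linarith
    then show ?thesis using T0[of j] by simp
  qed
  have dbig: "\<epsilon> < norm (d j)" for j
  proof -
    have "W j - w0 = T j *\<^sub>R d j" by (simp add: Wd)
    then have "norm (W j - w0) = norm (d j) * T j" using T0[of j] by simp
    moreover have "\<epsilon> * T j < norm (W j - w0)" using TW[of j] by blast
    ultimately have "\<epsilon> * T j < norm (d j) * T j" by simp
    moreover have "0 \<le> T j" using T0[of j] by simp
    ultimately show ?thesis by (rule mult_right_less_imp_less)
  qed
  have dbd: "norm (d j) \<le> 2 * norm \<xi> + 1" for j
  proof -
    have "(norm (\<xi> - d j))\<^sup>2 \<le> (norm \<xi> + 1)\<^sup>2"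
    proof -
      have "1 / real (Suc j) \<le> 1" by simp
      moreover have "(norm \<xi> + 1)\<^sup>2 = (norm \<xi>)\<^sup>2 + 2 * norm \<xi> + 1" by (simp add: power2_eq_square algebra_simps)
      ultimately have "(norm \<xi>)\<^sup>2 + 1 / Suc j \<le> (norm \<xi> + 1)\<^sup>2" using norm_ge_zero[of \<xi>] by linarith
      then show ?thesis using dsq[of j] by linarith
    qed
    then have "norm (\<xi> - d j) \<le> norm \<xi> + 1" by (rule power2_le_imp_le) simp
    moreover have "norm (d j) \<le> norm \<xi> + norm (\<xi> - d j)" using norm_triangle_sub[of "d j" \<xi>] by (simp add: norm_minus_commute)
    ultimately show ?thesis by linarith
  qed
  have "bounded (range d)" unfolding bounded_iff using dbd by blast
  then obtain l r where r: "strict_mono r" and lim: "(d \<circ> r) \<longlonglongrightarrow> l"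
    using bounded_imp_convergent_subsequence by blast
  have inv0: "(\<lambda>j. 1 / real (Suc j)) \<longlonglongrightarrow> 0"
    using LIMSEQ_Suc[OF lim_1_over_n] by simp
  have "(\<lambda>j. T j) \<longlonglongrightarrow> 0"
  proof (rule tendsto_sandwich[OF _ _ tendsto_const inv0])
    show "eventually (\<lambda>j. 0 \<le> T j) sequentially" using T0 by (simp add: less_imp_le)
    show "eventually (\<lambda>j. T j \<le> 1 / real (Suc j)) sequentially" using TW by (simp add: less_imp_le)
  qed
  then have Tr: "(\<lambda>j. T (r j)) \<longlonglongrightarrow> 0" using LIMSEQ_subseq_LIMSEQ[OF _ r] by (simp add: o_def)
  have tan: "l \<in> tangent_cone E w0"
  proof (rule tangent_from_seq[where s="\<lambda>j. T (r j)" and dd="d \<circ> r"])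
    show "\<And>j. 0 < T (r j)" using T0 by blast
    show "(\<lambda>j. T (r j)) \<longlonglongrightarrow> 0" by (rule Tr)
    show "(d \<circ> r) \<longlonglongrightarrow> l" by (rule lim)
    fix j
    have "W (r j) \<in> E" using TW by blast
    then show "w0 + T (r j) *\<^sub>R (d \<circ> r) j \<in> E" by (simp add: Wd)
  qed
  have inner_le: "inner l \<xi> \<le> 0" using xi tan by (simp add: normal_cone_def)
  have "(norm (\<xi> - l))\<^sup>2 \<le> (norm \<xi>)\<^sup>2"
  proof (rule LIMSEQ_le)
    show "(\<lambda>j. (norm (\<xi> - (d \<circ> r) j))\<^sup>2) \<longlonglongrightarrow> (norm (\<xi> - l))\<^sup>2"
      by (intro tendsto_intros lim)
    have inv_r: "(\<lambda>j. 1 / real (Suc (r j))) \<longlonglongrightarrow> 0"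
      using LIMSEQ_subseq_LIMSEQ[OF inv0 r] by (simp add: o_def)
    then show "(\<lambda>j. (norm \<xi>)\<^sup>2 + 1 / real (Suc (r j))) \<longlonglongrightarrow> (norm \<xi>)\<^sup>2"
    proof -
      have "(\<lambda>j. (norm \<xi>)\<^sup>2 + 1 / real (Suc (r j))) \<longlonglongrightarrow> (norm \<xi>)\<^sup>2 + 0"
        by (intro tendsto_intros inv_r)
      then show ?thesis by simp
    qed
    show "\<exists>N. \<forall>n\<ge>N. (norm (\<xi> - (d \<circ> r) n))\<^sup>2 \<le> (norm \<xi>)\<^sup>2 + 1 / real (Suc (r n))"
      using dsq by simp
  qed
  moreover have "\<epsilon> \<le> norm l"
  proof (rule LIMSEQ_le_const)
    show "(\<lambda>j. norm ((d \<circ> r) j)) \<longlonglongrightarrow> norm l" by (intro tendsto_intros lim)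
    show "\<exists>N. \<forall>n\<ge>N. \<epsilon> \<le> norm ((d \<circ> r) n)" using dbig by (simp add: less_imp_le)
  qed
  moreover have "(norm (\<xi> - l))\<^sup>2 = (norm \<xi>)\<^sup>2 - 2 * inner \<xi> l + (norm l)\<^sup>2" by (rule norm_diff_sq)
  moreover have "0 < (norm l)\<^sup>2" using e \<open>\<epsilon> \<le> norm l\<close> by (metis norm_zero not_le zero_less_power2)
  moreover have "inner \<xi> l \<le> 0" using inner_le by (simp add: inner_commute)
  ultimately show False by linarith
qed

lemma nearest_above:
  fixes U :: "'b::euclidean_space \<Rightarrow> ereal"
  assumes W: "W \<in> epi U" and near: "\<forall>w\<in>epi U. dist Y W \<le> dist Y w"
  shows "snd Y \<le> snd W"
proof (rule ccontr)
  assume "\<not> ?thesis"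
  then have lt: "snd W < snd Y" by simp
  have "U (fst W) \<le> ereal (snd W)" using W by (cases W) (simp add: epi_def)
  then have "(fst W, snd Y) \<in> epi U" using lt by (simp add: epi_def order_trans)
  then have "dist Y W \<le> dist Y (fst W, snd Y)" using near by blast
  then have "(dist Y W)\<^sup>2 \<le> (dist Y (fst W, snd Y))\<^sup>2" by (simp add: power_mono)
  then have "(norm (fst Y - fst W))\<^sup>2 + (snd Y - snd W)\<^sup>2 \<le> (norm (fst Y - fst W))\<^sup>2"
    by (simp add: dist_sq_pair)
  moreover have "(snd Y - snd W)\<^sup>2 > 0" using lt by simp
  ultimately show False by linarith
qed

lemma escape:
  fixes U :: "'b::euclidean_space \<Rightarrow> ereal" and m :: nat and B c ub R1 \<rho>0 :: real
  assumes cl: "closed (epi U)"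
    and Ub: "U zb = ereal ub"
    and low: "\<And>z. dist z zb < \<rho>0 \<Longrightarrow> U z > ereal (ub - 1)"
    and mpos: "m > 0"
    and B: "B = 1 + \<bar>c - ub\<bar>"
    and R1: "(norm (zb - a))\<^sup>2 + (ub - c)\<^sup>2 + B\<^sup>2 / m \<le> R1\<^sup>2" "R1 \<ge> 0"
    and small: "norm (a - zb) + R1 < \<rho>0"
  shows "\<exists>\<beta> z1 r1. 0 \<le> \<beta> \<and> (z1, r1) \<in> epi U \<and>
           (\<forall>w\<in>epi U. dist (a, c - \<beta>) (z1, r1) \<le> dist (a, c - \<beta>) w) \<and> c - \<beta> < r1 \<and>
           (dist (a, c - \<beta>) (z1, r1))\<^sup>2 \<le> (norm (zb - a))\<^sup>2 + (ub - c)\<^sup>2 + B\<^sup>2 / m"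
proof -
  define Y where "Y i = (a, c - real i * B / real m)" for i :: nat
  have zbE: "(zb, ub) \<in> epi U" using Ub by (simp add: epi_def)
  then have ne: "epi U \<noteq> {}" by blast
  have "\<forall>i. \<exists>w. w \<in> epi U \<and> (\<forall>w'\<in>epi U. dist (Y i) w \<le> dist (Y i) w')"
  proof
    fix i
    obtain x where "x \<in> epi U" "\<And>y. y \<in> epi U \<Longrightarrow> dist (Y i) x \<le> dist (Y i) y"
      using distance_attains_inf[OF cl ne, of "Y i"] by blast
    then show "\<exists>w. w \<in> epi U \<and> (\<forall>w'\<in>epi U. dist (Y i) w \<le> dist (Y i) w')" by blast
  qed
  then have "\<exists>W. \<forall>i. W i \<in> epi U \<and> (\<forall>w'\<in>epi U. dist (Y i) (W i) \<le> dist (Y i) w')"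
    by (rule choice)
  then obtain W where W: "\<And>i. W i \<in> epi U" "\<And>i. \<forall>w'\<in>epi U. dist (Y i) (W i) \<le> dist (Y i) w'"
    by blast
  define D where "D i = dist (Y i) (W i)" for i
  define hor where "hor i \<longleftrightarrow> snd (W i) = snd (Y i)" for i
  have above: "snd (Y i) \<le> snd (W i)" for i by (rule nearest_above[OF W(1) W(2)])
  have D0: "(D 0)\<^sup>2 \<le> (norm (zb - a))\<^sup>2 + (ub - c)\<^sup>2"
  proof -
    have "(zb, ub) \<in> epi U" using Ub by (simp add: epi_def)
    then have "D 0 \<le> dist (Y 0) (zb, ub)" using W(2) by (simp add: D_def)
    then have "(D 0)\<^sup>2 \<le> (dist (Y 0) (zb, ub))\<^sup>2" by (simp add: D_def power_mono)
    moreover have "(c - ub)\<^sup>2 = (ub - c)\<^sup>2" by (simp add: power2_commute)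
    ultimately show ?thesis by (simp add: dist_sq_pair Y_def norm_minus_commute)
  qed
  have Dhor: "(D i)\<^sup>2 = (norm (a - fst (W i)))\<^sup>2" if "hor i" for i
    using that by (simp add: D_def dist_sq_pair hor_def Y_def)
  have step: "(D (Suc i))\<^sup>2 \<le> (D i)\<^sup>2 + (B / m)\<^sup>2" if h: "hor i" for i
  proof -
    have "D (Suc i) \<le> dist (Y (Suc i)) (W i)" using W by (simp add: D_def)
    then have "(D (Suc i))\<^sup>2 \<le> (dist (Y (Suc i)) (W i))\<^sup>2" by (simp add: D_def power_mono)
    also have "\<dots> = (norm (a - fst (W i)))\<^sup>2 + (snd (Y (Suc i)) - snd (Y i))\<^sup>2"
      using h by (simp add: dist_sq_pair hor_def Y_def)
    also have "(snd (Y (Suc i)) - snd (Y i))\<^sup>2 = (B / m)\<^sup>2"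
    proof -
      have "snd (Y (Suc i)) - snd (Y i) = - (B / m)"
        by (simp add: Y_def add_divide_distrib diff_divide_distrib algebra_simps)
      then show ?thesis by simp
    qed
    finally show ?thesis using Dhor[OF h] by simp
  qed
  have claim: "i \<le> m \<longrightarrow> ((\<exists>j\<le>i. \<not> hor j \<and> (D j)\<^sup>2 \<le> (D 0)\<^sup>2 + real j * (B / m)\<^sup>2) \<or>
        ((\<forall>j\<le>i. hor j) \<and> (D i)\<^sup>2 \<le> (D 0)\<^sup>2 + real i * (B / m)\<^sup>2))" for i
  proof (induction i)
    case 0
    then show ?case by auto
  next
    case (Suc i)
    show ?case
    proof
      assume im: "Suc i \<le> m"
      then have "i \<le> m" by simp
      with Suc.IH consider (a) "\<exists>j\<le>i. \<not> hor j \<and> (D j)\<^sup>2 \<le> (D 0)\<^sup>2 + real j * (B / m)\<^sup>2"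
        | (b) "(\<forall>j\<le>i. hor j)" "(D i)\<^sup>2 \<le> (D 0)\<^sup>2 + real i * (B / m)\<^sup>2" by blast
      then show "(\<exists>j\<le>Suc i. \<not> hor j \<and> (D j)\<^sup>2 \<le> (D 0)\<^sup>2 + real j * (B / m)\<^sup>2) \<or>
        ((\<forall>j\<le>Suc i. hor j) \<and> (D (Suc i))\<^sup>2 \<le> (D 0)\<^sup>2 + real (Suc i) * (B / m)\<^sup>2)"
      proof cases
        case a
        then show ?thesis using le_SucI by blast
      next
        case b
        have "(D (Suc i))\<^sup>2 \<le> (D 0)\<^sup>2 + real (Suc i) * (B / m)\<^sup>2"
          using step[of i] b by (simp add: algebra_simps)
        then show ?thesis using b le_Suc_eq by (cases "hor (Suc i)") auto
      qed
    qed
  qed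
  have mB: "real j * (B / m)\<^sup>2 \<le> B\<^sup>2 / m" if "j \<le> m" for j
  proof -
    have "real j * (B / m)\<^sup>2 \<le> real m * (B / m)\<^sup>2" using that by (simp add: mult_right_mono)
    also have "\<dots> = B\<^sup>2 / m" using mpos by (simp add: power2_eq_square)
    finally show ?thesis .
  qed
  from claim[of m] consider (a) j where "j \<le> m" "\<not> hor j" "(D j)\<^sup>2 \<le> (D 0)\<^sup>2 + real j * (B / m)\<^sup>2"
    | (b) "\<forall>j\<le>m. hor j" "(D m)\<^sup>2 \<le> (D 0)\<^sup>2 + real m * (B / m)\<^sup>2" by auto
  then show ?thesis
  proof cases
    case a
    define \<beta> where "\<beta> = real j * B / real m"
    have Yj: "Y j = (a, c - \<beta>)" by (simp add: Y_def \<beta>_def)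
    have "0 \<le> \<beta>" using B mpos by (simp add: \<beta>_def)
    moreover have "c - \<beta> < snd (W j)" using above[of j] a(2) by (simp add: hor_def Yj less_le)
    moreover have "(D j)\<^sup>2 \<le> (norm (zb - a))\<^sup>2 + (ub - c)\<^sup>2 + B\<^sup>2 / m"
      using a(3) D0 mB[OF a(1)] by linarith
    ultimately show ?thesis using W[of j] Yj
      by (intro exI[of _ \<beta>] exI[of _ "fst (W j)"] exI[of _ "snd (W j)"]) (simp add: D_def)
  next
    case b
    have hm: "hor m" using b by simp
    have "(D m)\<^sup>2 \<le> R1\<^sup>2" using b(2) D0 mB[of m] R1(1) by linarith
    then have "D m \<le> R1" using R1(2) by (rule power2_le_imp_le)
    moreover have "D m = norm (a - fst (W m))"
      using Dhor[OF hm] power2_eq_iff_nonneg[of "D m" "norm (a - fst (W m))"] by (simp add: D_def)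
    ultimately have "norm (a - fst (W m)) \<le> R1" by simp
    then have "dist (fst (W m)) zb < \<rho>0" using small norm_triangle_ineq[of "fst (W m) - a" "a - zb"]
      by (simp add: dist_norm norm_minus_commute)
    then have "U (fst (W m)) > ereal (ub - 1)" by (rule low)
    moreover have "U (fst (W m)) \<le> ereal (snd (W m))" using W(1)[of m] by (cases "W m") (simp add: epi_def)
    moreover have "snd (W m) = c - B" using hm mpos by (simp add: hor_def Y_def)
    moreover have "c - B \<le> ub - 1" using B by linarith
    ultimately have "U (fst (W m)) \<le> ereal (ub - 1)" by (metis ereal_less_eq(3) order_trans)
    then show ?thesis using \<open>U (fst (W m)) > ereal (ub - 1)\<close> by simp
  qed
qed

lemma epi_closed:
  fixes U :: "'b::topological_space \<Rightarrow> ereal"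
  assumes "lsc U" shows "closed (epi U)"
  unfolding closed_def
proof (subst open_subopen, intro ballI)
  fix x assume "x \<in> - epi U"
  then obtain z r where x: "x = (z, r)" and lt: "ereal r < U z"
    by (cases x) (auto simp: epi_def)
  obtain r' where r': "ereal r < ereal r'" "ereal r' < U z" using ereal_dense2[OF lt] by auto
  have "ereal r' < Liminf (at z) U" using r'(2) assms unfolding lsc_def
    by (meson order_less_le_trans)
  then have "eventually (\<lambda>y. U y > ereal r') (at z)" by (rule less_LiminfD)
  then obtain S where S: "open S" "z \<in> S" "\<forall>y\<in>S. y \<noteq> z \<longrightarrow> U y > ereal r'"
    unfolding eventually_at_topological by auto
  show "\<exists>T. open T \<and> x \<in> T \<and> T \<subseteq> - epi U"
  proof (intro exI conjI)
    show "open (S \<times> {..<r'})" using S(1) by (intro open_Times) auto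
    show "x \<in> S \<times> {..<r'}" using x S(2) r'(1) by auto
    show "S \<times> {..<r'} \<subseteq> - epi U"
    proof
      fix w assume w: "w \<in> S \<times> {..<r'}"
      then obtain y s where ys: "w = (y, s)" "y \<in> S" "s < r'" by auto
      have "U y > ereal r'" using S(3) ys r' by (cases "y = z") auto
      then have "U y > ereal s" using ys(3) by (meson ereal_less_eq(3) less_le_trans order_less_imp_le not_le)
      then show "w \<in> - epi U" using ys by (auto simp: epi_def)
    qed
  qed
qed


lemma norm_pair_sq: "(norm (x, y))\<^sup>2 = (norm x)\<^sup>2 + (norm y)\<^sup>2"
  by (simp add: norm_Pair)

lemma approx_eps:
  fixes U :: "'b::euclidean_space \<Rightarrow> ereal"
  assumes lsc: "lsc U" and proper: "\<And>z. U z \<noteq> -\<infinity>" and Ub: "U zb = ereal ub"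
    and nc: "(n, nu) \<in> normal_cone (epi U) (zb, ub)" and e: "\<epsilon> > 0"
  shows "\<exists>z p lam. norm (z - zb) \<le> \<epsilon> \<and> norm (lam *\<^sub>R p - n) \<le> \<epsilon> \<and> \<bar>lam + nu\<bar> \<le> \<epsilon> \<and>
           lam > 0 \<and> U z \<noteq> \<infinity> \<and> p \<in> subdiff U z"
proof -
  define \<xi> where "\<xi> = (n, nu)"
  define w0 where "w0 = (zb, ub)"
  obtain \<delta> where d0: "\<delta> > 0" and dprop: "\<And>\<tau> w. 0 < \<tau> \<Longrightarrow> \<tau> < \<delta> \<Longrightarrow> w \<in> epi U \<Longrightarrow>
      (norm (w0 + \<tau> *\<^sub>R \<xi> - w))\<^sup>2 \<le> \<tau>\<^sup>2 * ((norm \<xi>)\<^sup>2 + \<delta>) \<Longrightarrow> norm (w - w0) \<le> \<epsilon> * \<tau>"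
    using normal_approx[OF nc e] unfolding \<xi>_def w0_def by blast
  have cl: "closed (epi U)" by (rule epi_closed[OF lsc])
  have "ereal (ub - 1) < Liminf (at zb) U"
  proof -
    have "ereal (ub - 1) < U zb" using Ub by simp
    also have "\<dots> \<le> Liminf (at zb) U" using lsc unfolding lsc_def by blast
    finally show ?thesis .
  qed
  then have "eventually (\<lambda>z. U z > ereal (ub - 1)) (at zb)" by (rule less_LiminfD)
  then obtain \<rho>0 where r0: "\<rho>0 > 0" and r0p: "\<And>z. z \<noteq> zb \<Longrightarrow> dist z zb < \<rho>0 \<Longrightarrow> U z > ereal (ub - 1)"
    unfolding eventually_at by auto
  have low: "U z > ereal (ub - 1)" if "dist z zb < \<rho>0" for z
    using r0p[OF _ that] Ub by (cases "z = zb") auto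
  define \<tau> where "\<tau> = min (\<delta> / 2) (min 1 (\<rho>0 / (2 * norm \<xi> + 2)))"
  have nx0: "2 * norm \<xi> + 2 > 0" by (simp add: add_nonneg_pos)
  have t0: "\<tau> > 0" using d0 r0 nx0 by (simp add: \<tau>_def)
  have t1: "\<tau> < \<delta>" using d0 by (simp add: \<tau>_def)
  have t2: "\<tau> \<le> 1" by (simp add: \<tau>_def)
  have t3: "\<tau> * (2 * norm \<xi> + 2) \<le> \<rho>0"
  proof -
    have "\<tau> \<le> \<rho>0 / (2 * norm \<xi> + 2)" by (simp add: \<tau>_def)
    then show ?thesis using nx0 by (simp add: pos_le_divide_eq)
  qed
  define a where "a = zb + \<tau> *\<^sub>R n"
  define c where "c = ub + \<tau> * nu"
  define B where "B = 1 + \<bar>c - ub\<bar>"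
  define \<kappa> where "\<kappa> = \<tau>\<^sup>2 * min \<delta> 1"
  have k0: "\<kappa> > 0" using t0 d0 by (simp add: \<kappa>_def)
  obtain m :: nat where mbig: "B\<^sup>2 / \<kappa> < real m" using reals_Archimedean2 by blast
  have "0 \<le> B\<^sup>2 / \<kappa>" using k0 by simp
  then have mpos: "m > 0" using mbig by linarith
  have Bm: "B\<^sup>2 / m < \<kappa>"
  proof -
    have "B\<^sup>2 < real m * \<kappa>" using mbig k0 by (simp add: divide_less_eq)
    then show ?thesis using mpos by (simp add: divide_less_eq mult.commute)
  qed
  have Bm1: "B\<^sup>2 / m \<le> \<tau>\<^sup>2 * \<delta>"
  proof -
    have "\<kappa> \<le> \<tau>\<^sup>2 * \<delta>" unfolding \<kappa>_def by (rule mult_left_mono) auto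
    then show ?thesis using Bm by linarith
  qed
  have Bm2: "B\<^sup>2 / m \<le> \<tau>\<^sup>2"
  proof -
    have "\<kappa> \<le> \<tau>\<^sup>2 * 1" unfolding \<kappa>_def by (rule mult_left_mono) auto
    then show ?thesis using Bm by linarith
  qed
  have base: "(norm (zb - a))\<^sup>2 + (ub - c)\<^sup>2 = \<tau>\<^sup>2 * (norm \<xi>)\<^sup>2"
  proof -
    have "(norm (zb - a))\<^sup>2 = \<tau>\<^sup>2 * (norm n)\<^sup>2" using t0 by (simp add: a_def power_mult_distrib)
    moreover have "(ub - c)\<^sup>2 = \<tau>\<^sup>2 * (norm nu)\<^sup>2" by (simp add: c_def power_mult_distrib power2_eq_square)
    ultimately show ?thesis by (simp add: \<xi>_def norm_pair_sq algebra_simps)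
  qed
  define R1 where "R1 = \<tau> * (norm \<xi> + 1)"
  have R1a: "(norm (zb - a))\<^sup>2 + (ub - c)\<^sup>2 + B\<^sup>2 / m \<le> R1\<^sup>2"
  proof -
    have "R1\<^sup>2 = \<tau>\<^sup>2 * (norm \<xi>)\<^sup>2 + \<tau>\<^sup>2 * (2 * norm \<xi>) + \<tau>\<^sup>2"
      by (simp add: R1_def power2_eq_square algebra_simps)
    moreover have "0 \<le> \<tau>\<^sup>2 * (2 * norm \<xi>)" by simp
    ultimately show ?thesis using base Bm2 by linarith
  qed
  have R1b: "R1 \<ge> 0" using t0 by (simp add: R1_def)
  have small: "norm (a - zb) + R1 < \<rho>0"
  proof -
    have "norm n \<le> norm \<xi>" unfolding \<xi>_def by (rule norm_fst_le)
    then have "norm (a - zb) \<le> \<tau> * norm \<xi>" using t0 by (simp add: a_def mult_left_mono)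
    then have "norm (a - zb) + R1 \<le> \<tau> * (2 * norm \<xi> + 1)" by (simp add: R1_def algebra_simps)
    also have "\<dots> < \<tau> * (2 * norm \<xi> + 2)" using t0 by simp
    finally show ?thesis using t3 by linarith
  qed
  obtain \<beta> z1 r1 where b0: "0 \<le> \<beta>" and zr: "(z1, r1) \<in> epi U"
    and near: "\<forall>w\<in>epi U. dist (a, c - \<beta>) (z1, r1) \<le> dist (a, c - \<beta>) w"
    and above: "c - \<beta> < r1"
    and dsq: "(dist (a, c - \<beta>) (z1, r1))\<^sup>2 \<le> (norm (zb - a))\<^sup>2 + (ub - c)\<^sup>2 + B\<^sup>2 / m"
    using escape[OF cl Ub low mpos B_def R1a R1b small] by blast
  define w' where "w' = (z1, r1 + \<beta>)"
  have w'E: "w' \<in> epi U" using zr b0 by (simp add: w'_def epi_def order_trans)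
  have eqv: "w0 + \<tau> *\<^sub>R \<xi> - w' = (a, c - \<beta>) - (z1, r1)"
    by (simp add: w0_def \<xi>_def w'_def a_def c_def algebra_simps)
  have "(norm (w0 + \<tau> *\<^sub>R \<xi> - w'))\<^sup>2 \<le> \<tau>\<^sup>2 * ((norm \<xi>)\<^sup>2 + \<delta>)"
  proof -
    have "(norm (w0 + \<tau> *\<^sub>R \<xi> - w'))\<^sup>2 = (dist (a, c - \<beta>) (z1, r1))\<^sup>2"
      by (simp add: eqv dist_norm)
    also have "\<dots> \<le> \<tau>\<^sup>2 * (norm \<xi>)\<^sup>2 + \<tau>\<^sup>2 * \<delta>" using dsq base Bm1 by linarith
    finally show ?thesis by (simp add: algebra_simps)
  qed
  then have close: "norm (w' - w0) \<le> \<epsilon> * \<tau>" using dprop[OF t0 t1 w'E] by blast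
  have Uz1: "U z1 = ereal r1"
    using nearest_graph[OF proper zr, of "(a, c - \<beta>)"] near above by auto
  define p where "p = (1 / (r1 - (c - \<beta>))) *\<^sub>R (a - z1)"
  have psub: "p \<in> subdiff U z1"
    using nearest_subdiff[OF proper zr, of "(a, c - \<beta>)"] near above by (auto simp: p_def)
  define lam where "lam = (r1 - (c - \<beta>)) / \<tau>"
  have lam0: "lam > 0" using above t0 by (simp add: lam_def)
  have lp: "lam *\<^sub>R p - n = (1 / \<tau>) *\<^sub>R (zb - z1)"
  proof -
    have k: "lam * (1 / (r1 - (c - \<beta>))) = 1 / \<tau>" using above t0 by (simp add: lam_def)
    have "lam *\<^sub>R p = (1 / \<tau>) *\<^sub>R (a - z1)" by (simp add: p_def k[symmetric])
    moreover have "a - z1 = (zb - z1) + \<tau> *\<^sub>R n" by (simp add: a_def algebra_simps)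
    moreover have "(1 / \<tau>) *\<^sub>R (\<tau> *\<^sub>R n) = n" using t0 by simp
    ultimately show ?thesis by (simp add: scaleR_add_right)
  qed
  have n1: "norm (z1 - zb) \<le> norm (w' - w0)"
    using norm_fst_le[of "z1 - zb" "r1 + \<beta> - ub"] by (simp add: w'_def w0_def)
  have n2: "\<bar>r1 + \<beta> - ub\<bar> \<le> norm (w' - w0)"
    using norm_snd_le[of "r1 + \<beta> - ub" "z1 - zb"] by (simp add: w'_def w0_def)
  have "norm (z1 - zb) \<le> \<epsilon>"
  proof -
    have "\<epsilon> * \<tau> \<le> \<epsilon>" using e t2 by (simp add: mult_left_le)
    then show ?thesis using n1 close by linarith
  qed
  moreover have "norm (lam *\<^sub>R p - n) \<le> \<epsilon>"
  proof -
    have "norm (lam *\<^sub>R p - n) = norm (z1 - zb) / \<tau>"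
      using t0 by (simp add: lp norm_minus_commute divide_inverse mult.commute)
    also have "\<dots> \<le> \<epsilon>" using n1 close t0 by (simp add: divide_le_eq)
    finally show ?thesis .
  qed
  moreover have "\<bar>lam + nu\<bar> \<le> \<epsilon>"
  proof -
    have "lam + nu = (r1 + \<beta> - ub) / \<tau>" using t0 by (simp add: lam_def c_def field_simps)
    then have "\<bar>lam + nu\<bar> = \<bar>r1 + \<beta> - ub\<bar> / \<tau>" using t0 by simp
    also have "\<dots> \<le> \<epsilon>" using n2 close t0 by (simp add: divide_le_eq)
    finally show ?thesis .
  qed
  moreover have "U z1 \<noteq> \<infinity>" using Uz1 by simp
  ultimately show ?thesis using lam0 psub by blast
qed

lemma eps_subgrad:
  fixes H :: "'a::euclidean_space \<Rightarrow> real"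
  assumes cv: "convex_on UNIV H" and ct: "continuous_on UNIV H" and d: "\<delta> > 0"
  shows "\<exists>v. \<forall>p. H q - \<delta> + inner v (p - q) \<le> H p"
proof -
  let ?S = "epigraph UNIV H"
  have conv: "convex ?S" using cv by (simp add: convex_epigraph)
  have "?S = {x. H (fst x) \<le> snd x}" by (auto simp: epigraph_def)
  moreover have "closed {x. H (fst x) \<le> snd x}"
    by (rule closed_Collect_le) (auto intro!: continuous_on_compose2[OF ct] continuous_intros)
  ultimately have cl: "closed ?S" by simp
  have nz: "(q, H q - \<delta>) \<notin> ?S" using d by (simp add: mem_epigraph)
  obtain a b where ab: "inner a (q, H q - \<delta>) < b" "\<forall>x\<in>?S. inner a x > b"
    using separating_hyperplane_closed_point[OF conv cl nz] by blast
  obtain a1 a2 where a: "a = (a1, a2)" by (cases a)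
  have key: "inner a1 p + a2 * H p > b" for p
  proof -
    have "(p, H p) \<in> ?S" by (simp add: mem_epigraph)
    then have "inner a (p, H p) > b" using ab(2) by blast
    then show ?thesis using a by simp
  qed
  have lt: "inner a1 q + a2 * (H q - \<delta>) < b" using ab(1) a by simp
  have "a2 * \<delta> > 0" using key[of q] lt by (simp add: algebra_simps)
  then have a2: "a2 > 0" using d by (simp add: zero_less_mult_iff)
  show ?thesis
  proof (intro exI allI)
    fix p
    have "inner a1 q + a2 * (H q - \<delta>) < inner a1 p + a2 * H p" using key[of p] lt by linarith
    then have "a2 * (H q - \<delta>) - inner a1 (p - q) < a2 * H p" by (simp add: inner_diff_right)
    then have "a2 * (H q - \<delta> + inner (- (1 / a2) *\<^sub>R a1) (p - q)) < a2 * H p"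
      using a2 by (simp add: algebra_simps)
    then show "H q - \<delta> + inner (- (1 / a2) *\<^sub>R a1) (p - q) \<le> H p"
      using a2 by simp
  qed
qed

lemma subgrad_bound:
  fixes H :: "'a::real_inner \<Rightarrow> real"
  assumes sg: "\<And>p. H q - \<delta> + inner v (p - q) \<le> H p"
    and lip: "\<And>p. \<bar>H p - H q\<bar> \<le> C * norm (p - q)" and C0: "C \<ge> 0"
  shows "norm v \<le> C + \<delta>"
proof (cases "v = 0")
  case True
  have "0 \<le> \<bar>H q - H q\<bar>" by simp
  have "\<delta> \<ge> 0" using sg[of q] by simp
  moreover note C0
  ultimately show ?thesis using True by simp
next
  case False
  define p where "p = q + (1 / norm v) *\<^sub>R v"
  have "inner v (p - q) = norm v" using False by (simp add: p_def power2_norm_eq_inner[symmetric] power2_eq_square)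
  moreover have "norm (p - q) = 1" using False by (simp add: p_def)
  moreover have "H p - H q \<le> C * norm (p - q)" using lip[of p] by linarith
  ultimately have "H p - H q \<le> C" by simp
  then show ?thesis using sg[of p] \<open>inner v (p - q) = norm v\<close> by linarith
qed

lemma hconj_bounds:
  fixes H :: "real \<Rightarrow> 'a::real_inner \<Rightarrow> 'a \<Rightarrow> real"
  assumes sg: "\<And>p. H t x q - \<delta> + inner v (p - q) \<le> H t x p"
  shows "hconj H t x v = ereal (real_of_ereal (hconj H t x v))"
    and "- H t x 0 \<le> real_of_ereal (hconj H t x v)"
    and "real_of_ereal (hconj H t x v) \<le> inner v q - H t x q + \<delta>"
proof -
  have up: "hconj H t x v \<le> ereal (inner v q - H t x q + \<delta>)"
    unfolding hconj_def
  proof (rule SUP_least)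
    fix p
    have "inner v p - H t x p \<le> inner v q - H t x q + \<delta>"
      using sg[of p] by (simp add: inner_diff_right)
    then show "ereal (inner v p - H t x p) \<le> ereal (inner v q - H t x q + \<delta>)" by simp
  qed
  have lo: "ereal (- H t x 0) \<le> hconj H t x v"
    unfolding hconj_def by (rule SUP_upper2[of 0]) auto
  have fin: "\<bar>hconj H t x v\<bar> \<noteq> \<infinity>" using up lo by auto
  then show "hconj H t x v = ereal (real_of_ereal (hconj H t x v))" by (simp add: ereal_real')
  then show "- H t x 0 \<le> real_of_ereal (hconj H t x v)"
    using lo by (metis ereal_less_eq(3))
  show "real_of_ereal (hconj H t x v) \<le> inner v q - H t x q + \<delta>"
    using up \<open>hconj H t x v = ereal (real_of_ereal (hconj H t x v))\<close> by (metis ereal_less_eq(3))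
qed

theorem proposition5p8:
  fixes U :: "real \<times> 'a::euclidean_space \<Rightarrow> ereal"
    and H :: "real \<Rightarrow> 'a \<Rightarrow> 'a \<Rightarrow> real"
    and T :: real
  assumes U_proper: "proper_fun U"
    and U_lsc: "lsc U"
    and U_outside: "\<And>t x. t \<notin> {0..T} \<Longrightarrow> U (t, x) = \<infinity>"
    and H1: "continuous_on ({0..T} \<times> UNIV \<times> UNIV) (\<lambda>(t, x, p). H t x p)"
    and H2: "\<And>t x. t \<in> {0..T} \<Longrightarrow> convex_on UNIV (H t x)"
    and H3: "\<And>R. R \<ge> 0 \<Longrightarrow> \<exists>C\<ge>0. \<forall>t\<in>{0..T}. \<forall>x\<in>cball 0 R. \<forall>p q.
               \<bar>H t x p - H t x q\<bar> \<le> C * norm (p - q)"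
    and HJ: "\<And>t x pt px. (t, x) \<in> edom U \<Longrightarrow> t < T \<Longrightarrow>
               (pt, px) \<in> subdiff U (t, x) \<Longrightarrow> - pt + H t x (- px) \<ge> 0"
  shows "\<forall>t x nt nx nu. (t, x) \<in> edom U \<and> 0 \<le> t \<and> t < T \<and>
           ((nt, nx), nu) \<in> normal_cone (epi U) ((t, x), real_of_ereal (U (t, x))) \<longrightarrow>
           (\<exists>tk xk \<alpha>k vk.
              ((\<lambda>k. (tk k, xk k)) \<longlonglongrightarrow> (t, x)) \<and> (\<alpha>k \<longlonglongrightarrow> 0) \<and>
              (\<forall>k. tk k \<in> {0..T} \<and> vk k \<in> edom (hconj H (tk k) (xk k)) \<and>
                   nt + inner (vk k) nx - nu * real_of_ereal (hconj H (tk k) (xk k) (vk k))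
                     \<le> \<alpha>k k))"
proof (intro allI impI)
  fix t :: real and x :: 'a and nt :: real and nx :: 'a and nu :: real
  assume A: "(t, x) \<in> edom U \<and> 0 \<le> t \<and> t < T \<and>
           ((nt, nx), nu) \<in> normal_cone (epi U) ((t, x), real_of_ereal (U (t, x)))"
  then have dom: "(t, x) \<in> edom U" and t0: "0 \<le> t" and tT: "t < T"
    and nc: "((nt, nx), nu) \<in> normal_cone (epi U) ((t, x), real_of_ereal (U (t, x)))" by auto
  define ub where "ub = real_of_ereal (U (t, x))"
  have Ub: "U (t, x) = ereal ub" using dom by (cases "U (t, x)") (auto simp: edom_def ub_def)
  have proper: "U z \<noteq> -\<infinity>" for z
  proof -
    have "\<forall>z. U z \<noteq> -\<infinity>" using U_proper unfolding proper_fun_def by blast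
    then show ?thesis by blast
  qed
  have nc': "((nt, nx), nu) \<in> normal_cone (epi U) ((t, x), ub)" using nc by (simp add: ub_def)
  define eps where "eps k = min (1 / real (Suc k)) ((T - t) / 2)" for k :: nat
  have eps0: "eps k > 0" for k using tT by (simp add: eps_def)
  have "\<forall>k. \<exists>z p lam. norm (z - (t, x)) \<le> eps k \<and> norm (lam *\<^sub>R p - (nt, nx)) \<le> eps k \<and>
          \<bar>lam + nu\<bar> \<le> eps k \<and> lam > 0 \<and> U z \<noteq> \<infinity> \<and> p \<in> subdiff U z"
    using approx_eps[OF U_lsc proper Ub nc' eps0] by blast
  then have "\<exists>Z. \<forall>k. \<exists>p lam. norm (Z k - (t, x)) \<le> eps k \<and> norm (lam *\<^sub>R p - (nt, nx)) \<le> eps k \<and>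
          \<bar>lam + nu\<bar> \<le> eps k \<and> lam > 0 \<and> U (Z k) \<noteq> \<infinity> \<and> p \<in> subdiff U (Z k)"
    by (rule choice)
  then obtain Z where "\<forall>k. \<exists>p lam. norm (Z k - (t, x)) \<le> eps k \<and> norm (lam *\<^sub>R p - (nt, nx)) \<le> eps k \<and>
          \<bar>lam + nu\<bar> \<le> eps k \<and> lam > 0 \<and> U (Z k) \<noteq> \<infinity> \<and> p \<in> subdiff U (Z k)" by blast
  then have "\<exists>P. \<forall>k. \<exists>lam. norm (Z k - (t, x)) \<le> eps k \<and> norm (lam *\<^sub>R P k - (nt, nx)) \<le> eps k \<and>
          \<bar>lam + nu\<bar> \<le> eps k \<and> lam > 0 \<and> U (Z k) \<noteq> \<infinity> \<and> P k \<in> subdiff U (Z k)"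
    by (rule choice)
  then obtain P where "\<forall>k. \<exists>lam. norm (Z k - (t, x)) \<le> eps k \<and> norm (lam *\<^sub>R P k - (nt, nx)) \<le> eps k \<and>
          \<bar>lam + nu\<bar> \<le> eps k \<and> lam > 0 \<and> U (Z k) \<noteq> \<infinity> \<and> P k \<in> subdiff U (Z k)" by blast
  then have "\<exists>Lm. \<forall>k. norm (Z k - (t, x)) \<le> eps k \<and> norm (Lm k *\<^sub>R P k - (nt, nx)) \<le> eps k \<and>
          \<bar>Lm k + nu\<bar> \<le> eps k \<and> Lm k > 0 \<and> U (Z k) \<noteq> \<infinity> \<and> P k \<in> subdiff U (Z k)"
    by (rule choice)
  then obtain Lm where ZPL: "\<And>k. norm (Z k - (t, x)) \<le> eps k \<and> norm (Lm k *\<^sub>R P k - (nt, nx)) \<le> eps k \<and>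
          \<bar>Lm k + nu\<bar> \<le> eps k \<and> Lm k > 0 \<and> U (Z k) \<noteq> \<infinity> \<and> P k \<in> subdiff U (Z k)" by blast
  define tk where "tk k = fst (Z k)" for k
  define xk where "xk k = snd (Z k)" for k
  define pt where "pt k = fst (P k)" for k
  define px where "px k = snd (P k)" for k
  have Zk: "Z k = (tk k, xk k)" for k by (simp add: tk_def xk_def)
  have Pk: "P k = (pt k, px k)" for k by (simp add: pt_def px_def)
  have eps1: "eps k \<le> 1 / real (Suc k)" for k unfolding eps_def by (rule min.cobounded1)
  have eps2: "eps k \<le> (T - t) / 2" for k unfolding eps_def by (rule min.cobounded2)
  have Lm0: "Lm k > 0" for k using ZPL by blast
  have dom_k: "(tk k, xk k) \<in> edom U" for k
    using ZPL[of k] proper[of "Z k"] by (simp add: edom_def Zk)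
  have tk_in: "tk k \<in> {0..T}" for k
  proof (rule ccontr)
    assume "tk k \<notin> {0..T}"
    then have "U (tk k, xk k) = \<infinity>" by (rule U_outside)
    then show False using dom_k[of k] by (simp add: edom_def)
  qed
  have tk_lt: "tk k < T" for k
  proof -
    have "\<bar>tk k - t\<bar> \<le> norm (Z k - (t, x))"
      using norm_fst_le[of "tk k - t" "xk k - x"] by (simp add: Zk)
    then have "\<bar>tk k - t\<bar> \<le> (T - t) / 2" using ZPL[of k] eps2[of k] by linarith
    then have "tk k - t \<le> (T - t) / 2" by (rule abs_le_D1)
    then have "2 * tk k \<le> T + t" by (simp add: field_simps)
    then show ?thesis using tT by simp
  qed
  have HJk: "0 \<le> - pt k + H (tk k) (xk k) (- px k)" for k
    using HJ[OF dom_k tk_lt] ZPL[of k] by (simp add: Zk Pk)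
  have inv0: "(\<lambda>k. 1 / real (Suc k)) \<longlonglongrightarrow> 0"
    using LIMSEQ_Suc[OF lim_1_over_n] by simp
  have Zlim: "Z \<longlonglongrightarrow> (t, x)"
  proof -
    have "(\<lambda>k. Z k - (t, x)) \<longlonglongrightarrow> 0"
    proof (rule Lim_null_comparison[OF _ inv0])
      show "\<forall>\<^sub>F k in sequentially. norm (Z k - (t, x)) \<le> 1 / real (Suc k)"
        using ZPL eps1 order_trans by (blast intro: always_eventually)
    qed
    then show ?thesis by (simp add: LIM_zero_iff)
  qed
  have Lmlim: "Lm \<longlonglongrightarrow> - nu"
  proof -
    have "(\<lambda>k. Lm k - (- nu)) \<longlonglongrightarrow> 0"
    proof (rule Lim_null_comparison[OF _ inv0])
      show "\<forall>\<^sub>F k in sequentially. norm (Lm k - (- nu)) \<le> 1 / real (Suc k)"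
      proof (intro always_eventually allI)
        fix k
        have "norm (Lm k - (- nu)) = \<bar>Lm k + nu\<bar>" by simp
        then show "norm (Lm k - (- nu)) \<le> 1 / real (Suc k)" using ZPL[of k] eps1[of k] by linarith
      qed
    qed
    then show ?thesis by (rule LIM_zero_iff[THEN iffD1])
  qed
  have LPlim: "(\<lambda>k. Lm k *\<^sub>R P k) \<longlonglongrightarrow> (nt, nx)"
  proof -
    have "(\<lambda>k. Lm k *\<^sub>R P k - (nt, nx)) \<longlonglongrightarrow> 0"
    proof (rule Lim_null_comparison[OF _ inv0])
      show "\<forall>\<^sub>F k in sequentially. norm (Lm k *\<^sub>R P k - (nt, nx)) \<le> 1 / real (Suc k)"
        using ZPL eps1 order_trans by (blast intro: always_eventually)
    qed
    then show ?thesis by (simp add: LIM_zero_iff)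
  qed
  have LPt: "(\<lambda>k. Lm k * pt k) \<longlonglongrightarrow> nt"
    using tendsto_fst[OF LPlim] by (simp add: Pk)
  have LPx: "(\<lambda>k. Lm k *\<^sub>R px k) \<longlonglongrightarrow> nx"
    using tendsto_snd[OF LPlim] by (simp add: Pk)
  have nu0: "nu \<le> 0"
  proof -
    have "0 \<le> - nu" by (rule LIMSEQ_le_const[OF Lmlim]) (use Lm0 less_imp_le in blast)
    then show ?thesis by simp
  qed
  have "Bseq Z" using Zlim by (rule convergent_imp_Bseq[OF convergentI])
  then obtain K where K0: "K > 0" and Kb: "\<And>k. norm (Z k) \<le> K" unfolding Bseq_def by blast
  have xk_ball: "xk k \<in> cball 0 K" for k
    using norm_snd_le[of "xk k" "tk k"] Kb[of k] by (simp add: Zk)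
  obtain C where C0: "C \<ge> 0" and Clip: "\<And>s y p q. s \<in> {0..T} \<Longrightarrow> y \<in> cball 0 K \<Longrightarrow>
      \<bar>H s y p - H s y q\<bar> \<le> C * norm (p - q)"
    using H3[of K] K0 by auto
  have Hcont: "continuous_on UNIV (H (tk k) (xk k))" for k
  proof -
    have "continuous_on UNIV (\<lambda>p. (\<lambda>(t, x, p). H t x p) (tk k, xk k, p))"
      by (rule continuous_on_compose2[OF H1]) (use tk_in[of k] in \<open>auto intro!: continuous_intros\<close>)
    then show ?thesis by simp
  qed
  define dl where "dl k = 1 / real (Suc k)" for k
  have dl0: "dl k > 0" for k by (simp add: dl_def)
  have "\<forall>k. \<exists>v. \<forall>p. H (tk k) (xk k) (- px k) - dl k + inner v (p - (- px k)) \<le> H (tk k) (xk k) p"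
    using eps_subgrad[OF H2[OF tk_in] Hcont dl0] by blast
  then have "\<exists>V. \<forall>k. \<forall>p. H (tk k) (xk k) (- px k) - dl k + inner (V k) (p - (- px k)) \<le> H (tk k) (xk k) p"
    by (rule choice)
  then obtain V where Vsg: "\<And>k p. H (tk k) (xk k) (- px k) - dl k + inner (V k) (p - (- px k)) \<le> H (tk k) (xk k) p"
    by blast
  have Vb: "norm (V k) \<le> C + 1" for k
  proof -
    have "norm (V k) \<le> C + dl k"
      by (rule subgrad_bound[OF Vsg Clip[OF tk_in xk_ball] C0])
    moreover have "dl k \<le> 1" by (simp add: dl_def)
    ultimately show ?thesis by linarith
  qed
  define L where "L k = real_of_ereal (hconj H (tk k) (xk k) (V k))" for k
  have Lfin: "hconj H (tk k) (xk k) (V k) = ereal (L k)" for k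
    using hconj_bounds(1)[of H "tk k" "xk k" "- px k" "dl k" "V k", OF Vsg[of k]] by (simp add: L_def)
  have Llo: "- H (tk k) (xk k) 0 \<le> L k" for k
    using hconj_bounds(2)[of H "tk k" "xk k" "- px k" "dl k" "V k", OF Vsg[of k]] by (simp add: L_def)
  have Lup: "L k \<le> inner (V k) (- px k) - H (tk k) (xk k) (- px k) + dl k" for k
    using hconj_bounds(3)[of H "tk k" "xk k" "- px k" "dl k" "V k", OF Vsg[of k]] by (simp add: L_def)
  define a where "a k = (if nu < 0 then - nu else Lm k)" for k
  have a0: "a k > 0" for k using Lm0 by (simp add: a_def)
  define last where "last k = (if nu < 0 then 0 else Lm k * \<bar>H (tk k) (xk k) 0\<bar>)" for k
  define \<alpha> where "\<alpha> k = a k * dl k + \<bar>nt - a k * pt k\<bar> + (C + 1) * norm (nx - a k *\<^sub>R px k) + last k" for k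
  have ineq: "nt + inner (V k) nx - nu * L k \<le> \<alpha> k" for k
  proof -
    have S: "pt k + inner (V k) (px k) + L k \<le> dl k"
      using HJk[of k] Lup[of k] by (simp add: inner_minus_right)
    then have aS: "a k * (pt k + inner (V k) (px k) + L k) \<le> a k * dl k"
      using a0[of k] by (simp add: mult_left_mono)
    have iden: "nt + inner (V k) nx - nu * L k = a k * (pt k + inner (V k) (px k) + L k)
        + (nt - a k * pt k) + inner (V k) (nx - a k *\<^sub>R px k) + (- nu - a k) * L k"
      by (simp add: algebra_simps inner_diff_right)
    have b1: "nt - a k * pt k \<le> \<bar>nt - a k * pt k\<bar>" by simp
    have b2: "inner (V k) (nx - a k *\<^sub>R px k) \<le> (C + 1) * norm (nx - a k *\<^sub>R px k)"
    proof -
      have "inner (V k) (nx - a k *\<^sub>R px k) \<le> norm (V k) * norm (nx - a k *\<^sub>R px k)"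
        by (rule norm_cauchy_schwarz)
      also have "\<dots> \<le> (C + 1) * norm (nx - a k *\<^sub>R px k)"
        using Vb[of k] by (simp add: mult_right_mono)
      finally show ?thesis .
    qed
    have b3: "(- nu - a k) * L k \<le> last k"
    proof (cases "nu < 0")
      case True
      then show ?thesis by (simp add: a_def last_def)
    next
      case False
      then have "nu = 0" using nu0 by simp
      then have "(- nu - a k) * L k = - (Lm k * L k)" using False by (simp add: a_def)
      also have "\<dots> \<le> Lm k * H (tk k) (xk k) 0"
        using Llo[of k] Lm0[of k] mult_left_mono[of "- H (tk k) (xk k) 0" "L k" "Lm k"] by simp
      also have "\<dots> \<le> Lm k * \<bar>H (tk k) (xk k) 0\<bar>" using Lm0[of k] by (simp add: mult_left_mono)
      finally show ?thesis using False by (simp add: last_def)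
    qed
    show ?thesis using iden aS b1 b2 b3 by (simp add: \<alpha>_def)
  qed
  have dllim: "dl \<longlonglongrightarrow> 0" using inv0 by (simp add: dl_def[abs_def])
  have alim: "a \<longlonglongrightarrow> - nu"
    using Lmlim by (cases "nu < 0") (simp_all add: a_def[abs_def])
  have apt: "(\<lambda>k. a k * pt k) \<longlonglongrightarrow> nt \<and> (\<lambda>k. a k *\<^sub>R px k) \<longlonglongrightarrow> nx"
  proof (cases "nu < 0")
    case True
    have q: "(\<lambda>k. - nu / Lm k) \<longlonglongrightarrow> - nu / - nu" using True by (intro tendsto_intros Lmlim) simp
    have q1: "(\<lambda>k. - nu / Lm k) \<longlonglongrightarrow> 1" using q True by simp
    have e1: "a k * pt k = (- nu / Lm k) * (Lm k * pt k)" for k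
      using True Lm0[of k] by (simp add: a_def)
    have e2: "a k *\<^sub>R px k = (- nu / Lm k) *\<^sub>R (Lm k *\<^sub>R px k)" for k
      using True Lm0[of k] by (simp add: a_def)
    have "(\<lambda>k. (- nu / Lm k) * (Lm k * pt k)) \<longlonglongrightarrow> 1 * nt" by (intro tendsto_intros q1 LPt)
    moreover have "(\<lambda>k. (- nu / Lm k) *\<^sub>R (Lm k *\<^sub>R px k)) \<longlonglongrightarrow> 1 *\<^sub>R nx" by (intro tendsto_intros q1 LPx)
    ultimately show ?thesis by (simp add: e1 e2)
  next
    case False
    then show ?thesis using LPt LPx by (simp add: a_def)
  qed
  have lastlim: "last \<longlonglongrightarrow> 0"
  proof (cases "nu < 0")
    case True
    then show ?thesis by (simp add: last_def[abs_def])
  next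
    case False
    then have nu00: "nu = 0" using nu0 by simp
    have "((\<lambda>k. (\<lambda>(t, x, p). H t x p) (tk k, xk k, 0)) \<longlongrightarrow> (\<lambda>(t, x, p). H t x p) (t, x, 0)) sequentially"
    proof (rule continuous_on_tendsto_compose[OF H1])
      have tklim: "(\<lambda>k. tk k) \<longlonglongrightarrow> t" using tendsto_fst[OF Zlim] by (simp add: tk_def)
      have xklim: "(\<lambda>k. xk k) \<longlonglongrightarrow> x" using tendsto_snd[OF Zlim] by (simp add: xk_def)
      show "(\<lambda>k. (tk k, xk k, 0)) \<longlonglongrightarrow> (t, x, 0)"
        by (intro tendsto_intros tklim xklim)
      show "(t, x, 0) \<in> {0..T} \<times> UNIV \<times> UNIV" using t0 tT by simp
      show "\<forall>\<^sub>F k in sequentially. (tk k, xk k, 0) \<in> {0..T} \<times> UNIV \<times> UNIV"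
        using tk_in by simp
    qed
    then have "(\<lambda>k. H (tk k) (xk k) 0) \<longlonglongrightarrow> H t x 0" by simp
    then have "(\<lambda>k. Lm k * \<bar>H (tk k) (xk k) 0\<bar>) \<longlonglongrightarrow> (- nu) * \<bar>H t x 0\<bar>"
      by (intro tendsto_intros Lmlim)
    then show ?thesis using False nu00 by (simp add: last_def[abs_def])
  qed
  have alphalim: "\<alpha> \<longlonglongrightarrow> 0"
  proof -
    have "\<alpha> = (\<lambda>k. a k * dl k + \<bar>nt - a k * pt k\<bar> + (C + 1) * norm (nx - a k *\<^sub>R px k) + last k)"
      by (simp add: \<alpha>_def[abs_def])
    moreover have "(\<lambda>k. a k * dl k + \<bar>nt - a k * pt k\<bar> + (C + 1) * norm (nx - a k *\<^sub>R px k) + last k)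
        \<longlonglongrightarrow> (- nu) * 0 + \<bar>nt - nt\<bar> + (C + 1) * norm (nx - nx) + 0"
      using apt by (intro tendsto_intros alim dllim lastlim) auto
    ultimately show ?thesis by simp
  qed
  show "\<exists>tk xk \<alpha>k vk.
              ((\<lambda>k. (tk k, xk k)) \<longlonglongrightarrow> (t, x)) \<and> (\<alpha>k \<longlonglongrightarrow> 0) \<and>
              (\<forall>k. tk k \<in> {0..T} \<and> vk k \<in> edom (hconj H (tk k) (xk k)) \<and>
                   nt + inner (vk k) nx - nu * real_of_ereal (hconj H (tk k) (xk k) (vk k))
                     \<le> \<alpha>k k)"
  proof (intro exI conjI allI)
    show "(\<lambda>k. (tk k, xk k)) \<longlonglongrightarrow> (t, x)" using Zlim by (simp add: Zk[symmetric])
    show "\<alpha> \<longlonglongrightarrow> 0" by (rule alphalim)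
    fix k
    show "tk k \<in> {0..T}" by (rule tk_in)
    show "V k \<in> edom (hconj H (tk k) (xk k))" using Lfin[of k] by (simp add: edom_def)
    show "nt + inner (V k) nx - nu * real_of_ereal (hconj H (tk k) (xk k) (V k)) \<le> \<alpha> k"
      using ineq[of k] by (simp add: L_def)
  qed
qed

end
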